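(* Consider the private counterfactual retrieval problem described in the context, with $N=2$ servers, database size $M$, dimension $d$, attribute bound $R$, and let $q>R^2 d$ be a prime. Then there exists a scheme over $\mathbb{F}_q$ that satisfies decodability (the user recovers exactly the index $\theta^*=\arg\min_{i\in[M]}\|x-y_i\|^2$ of the closest accepted sample) and perfect user privacy, and whose communication cost is $2(d+M)$ symbols of $\mathbb{F}_q$.
   Context: Setting (private counterfactual retrieval, PCR). A database $\mathcal{D}=\{y_1,\dots,y_M\}$ of accepted samples, each $y_i\in[0:R]^d$ (integer attributes between $0$ and $R$), is stored in replicated form on $N$ non-colluding, non-communicating servers. A user holds a (rejected) sample $x\in[0:R]^d$. All integers are viewed as elements of the prime field $\mathbb{F}_q$. The goal is for the user to learn $\theta^*=\arg\min_{i\in[M]}\|x-y_i\|^2$ (squared Euclidean distance computed over the integers). A scheme works as follows: the user, using $x$ and private randomness, sends a query $Q_n$ (a tuple of elements of $\mathbb{F}_q$) to server $n\in[N]$; the servers share common randomness $Z'$ unknown to the user; server $n$ returns an answer $A_n$ that is a deterministic function of $(\mathcal{D},Q_n,Z')$, i.e. $H(A_n\mid \mathcal{D},Q_n,Z')=0$. Decodability: $H(\theta^*\mid Q_{[N]},A_{[N]},x)=0$. Perfect user privacy: for every $n\in[N]$, $I(x,\theta^*;Q_n,A_n\mid \mathcal{D})=0$. The communication cost is the total number of $\mathbb{F}_q$ symbols uploaded in all queries plus downloaded in all answers. *)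

theory Defs
  imports "HOL-Probability.Probability_Mass_Function"
begin

text \<open>Vectors in [0:R]^d are nat lists of length d with entries at most R.
  Elements of F_q are represented by their canonical representatives 0..q-1.\<close>

definition valid_vec :: "nat \<Rightarrow> nat \<Rightarrow> nat list \<Rightarrow> bool" where
  "valid_vec R d v \<longleftrightarrow> length v = d \<and> (\<forall>a\<in>set v. a \<le> R)"

definition valid_db :: "nat \<Rightarrow> nat \<Rightarrow> nat \<Rightarrow> nat list list \<Rightarrow> bool" where
  "valid_db M d R DB \<longleftrightarrow> length DB = M \<and> (\<forall>y\<in>set DB. valid_vec R d y)"

definition field_symbols :: "nat \<Rightarrow> nat list \<Rightarrow> bool" where
  "field_symbols q s \<longleftrightarrow> (\<forall>a\<in>set s. a < q)"

definition sqdist :: "nat list \<Rightarrow> nat list \<Rightarrow> int" where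
  "sqdist x y = (\<Sum>j<length x. (int (x ! j) - int (y ! j))^2)"

text \<open>theta* = argmin_i ||x - y_i||^2 (0-based indices; ties broken towards the least index).\<close>
definition closest :: "nat list \<Rightarrow> nat list list \<Rightarrow> nat" where
  "closest x DB = (LEAST i. i < length DB \<and>
      (\<forall>k<length DB. sqdist x (DB ! i) \<le> sqdist x (DB ! k)))"

text \<open>PU: user's private randomness; PZ: servers' common randomness (independent of PU).
  Q n x u: query to server n \<in> {1,2}; A n DB qry z: answer of server n (deterministic in DB, qry, z);
  dec: the user's decoder, a function of x, all queries and all answers.\<close>
definition PCR2_scheme ::
  "nat \<Rightarrow> nat \<Rightarrow> nat \<Rightarrow> nat \<Rightarrow> nat list pmf \<Rightarrow> nat list pmf
   \<Rightarrow> (nat \<Rightarrow> nat list \<Rightarrow> nat list \<Rightarrow> nat list)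
   \<Rightarrow> (nat \<Rightarrow> nat list list \<Rightarrow> nat list \<Rightarrow> nat list \<Rightarrow> nat list)
   \<Rightarrow> (nat list \<Rightarrow> nat list \<Rightarrow> nat list \<Rightarrow> nat list \<Rightarrow> nat list \<Rightarrow> nat) \<Rightarrow> bool" where
  "PCR2_scheme q M d R PU PZ Q A dec \<longleftrightarrow>
     \<comment> \<open>all uploaded / downloaded symbols are elements of F_q\<close>
     (\<forall>DB x u z n. valid_db M d R DB \<longrightarrow> valid_vec R d x \<longrightarrow> u \<in> set_pmf PU \<longrightarrow>
        z \<in> set_pmf PZ \<longrightarrow> n \<in> {1,2} \<longrightarrow>
        field_symbols q (Q n x u) \<and> field_symbols q (A n DB (Q n x u) z))
   \<and> \<comment> \<open>decodability\<close>
     (\<forall>DB x u z. valid_db M d R DB \<longrightarrow> valid_vec R d x \<longrightarrow> u \<in> set_pmf PU \<longrightarrow>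
        z \<in> set_pmf PZ \<longrightarrow>
        dec x (Q 1 x u) (Q 2 x u) (A 1 DB (Q 1 x u) z) (A 2 DB (Q 2 x u) z) = closest x DB)
   \<and> \<comment> \<open>perfect user privacy: given DB, the law of (Q_n, A_n) does not depend on x\<close>
     (\<forall>DB n x x'. valid_db M d R DB \<longrightarrow> n \<in> {1,2} \<longrightarrow> valid_vec R d x \<longrightarrow> valid_vec R d x' \<longrightarrow>
        map_pmf (\<lambda>(u,z). (Q n x u, A n DB (Q n x u) z)) (pair_pmf PU PZ)
      = map_pmf (\<lambda>(u,z). (Q n x' u, A n DB (Q n x' u) z)) (pair_pmf PU PZ))"

definition PCR2_cost ::
  "(nat \<Rightarrow> nat list \<Rightarrow> nat list \<Rightarrow> nat list)
   \<Rightarrow> (nat \<Rightarrow> nat list list \<Rightarrow> nat list \<Rightarrow> nat list \<Rightarrow> nat list)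
   \<Rightarrow> nat list list \<Rightarrow> nat list \<Rightarrow> nat list \<Rightarrow> nat list \<Rightarrow> nat" where
  "PCR2_cost Q A DB x u z =
     length (Q 1 x u) + length (Q 2 x u) + length (A 1 DB (Q 1 x u) z) + length (A 2 DB (Q 2 x u) z)"

end

theory Submission
  imports Defs
begin

definition vecs :: "nat \<Rightarrow> nat \<Rightarrow> nat list set" where
  "vecs q d = {u. set u \<subseteq> {..<q} \<and> length u = d}"

definition padd :: "nat \<Rightarrow> nat list \<Rightarrow> nat list \<Rightarrow> nat list" where
  "padd q x u = map2 (\<lambda>a b. (a + b) mod q) x u"

definition spd :: "nat \<Rightarrow> nat list \<Rightarrow> nat list \<Rightarrow> int" where
  "spd d v y = (\<Sum>j<d. int (v ! j) * int (y ! j))"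

definition nrm :: "nat \<Rightarrow> nat list \<Rightarrow> int" where
  "nrm d v = (\<Sum>j<d. int (v ! j) ^ 2)"

definition ans1 :: "nat \<Rightarrow> nat \<Rightarrow> nat list list \<Rightarrow> nat list \<Rightarrow> nat list" where
  "ans1 q d DB p = map (\<lambda>y. nat ((nrm d y - 2 * spd d p y) mod int q)) DB"

definition ans2 :: "nat \<Rightarrow> nat \<Rightarrow> nat list list \<Rightarrow> nat list \<Rightarrow> nat list" where
  "ans2 q d DB u = map (\<lambda>y. nat ((2 * spd d u y) mod int q)) DB"

definition Dv :: "nat \<Rightarrow> nat \<Rightarrow> nat list \<Rightarrow> nat list \<Rightarrow> nat list \<Rightarrow> nat \<Rightarrow> nat" where
  "Dv q d x a1 a2 i = nat ((int (a1 ! i) + int (a2 ! i) + nrm d x) mod int q)"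

definition decf :: "nat \<Rightarrow> nat \<Rightarrow> nat list \<Rightarrow> nat list \<Rightarrow> nat list \<Rightarrow> nat" where
  "decf q d x a1 a2 = (LEAST i. i < length a1 \<and> (\<forall>k<length a1. Dv q d x a1 a2 i \<le> Dv q d x a1 a2 k))"

lemma vecs_finite: "finite (vecs q d)"
  unfolding vecs_def by (rule finite_lists_length_eq) simp

lemma vecs_ne: "q > 0 \<Longrightarrow> vecs q d \<noteq> {}"
proof -
  assume "q > 0"
  then have "replicate d 0 \<in> vecs q d" by (auto simp: vecs_def)
  then show ?thesis by blast
qed

lemma padd_len: "length x = d \<Longrightarrow> length u = d \<Longrightarrow> length (padd q x u) = d"
  by (simp add: padd_def)

lemma padd_nth: "length x = d \<Longrightarrow> length u = d \<Longrightarrow> j < d \<Longrightarrow> padd q x u ! j = (x ! j + u ! j) mod q"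
  by (simp add: padd_def)

lemma padd_in: "q > 0 \<Longrightarrow> length x = d \<Longrightarrow> u \<in> vecs q d \<Longrightarrow> padd q x u \<in> vecs q d"
  unfolding vecs_def padd_def by (auto simp: set_zip)

lemma mod_cancel_aux: "(a + b) mod q = (a + c) mod (q::nat) \<Longrightarrow> b < q \<Longrightarrow> c < q \<Longrightarrow> b = c"
proof -
  assume e: "(a + b) mod q = (a + c) mod (q::nat)" and b: "b < q" and c: "c < q"
  have "(int a + int b) mod int q = (int a + int c) mod int q"
    using e by (metis of_nat_add of_nat_mod)
  then have "((int a + int b) - int a) mod int q = ((int a + int c) - int a) mod int q"
    by (rule mod_diff_cong) simp
  then have "int b mod int q = int c mod int q" by simp
  then show "b = c" using b c by simp
qed

lemma padd_bij: "q > 0 \<Longrightarrow> length x = d \<Longrightarrow> bij_betw (padd q x) (vecs q d) (vecs q d)"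
proof -
  assume q: "q > 0" and x: "length x = d"
  have inj: "inj_on (padd q x) (vecs q d)"
  proof (rule inj_onI)
    fix u v assume u: "u \<in> vecs q d" and v: "v \<in> vecs q d" and e: "padd q x u = padd q x v"
    show "u = v"
    proof (rule nth_equalityI)
      show "length u = length v" using u v by (simp add: vecs_def)
      fix j assume j: "j < length u"
      have pe: "padd q x u ! j = padd q x v ! j" using e by simp
      have lv: "length v = length u" using u v by (simp add: vecs_def)
      have m1: "u ! j \<in> set u" using j by simp
      have m2: "v ! j \<in> set v" using j lv by simp
      have "u ! j < q" using m1 u by (auto simp: vecs_def)
      moreover have "v ! j < q" using m2 v by (auto simp: vecs_def)
      moreover have "(x ! j + u ! j) mod q = (x ! j + v ! j) mod q"
        using pe u v j x lv by (auto simp: vecs_def padd_nth)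
      ultimately show "u ! j = v ! j" using mod_cancel_aux by blast
    qed
  qed
  have sub: "padd q x ` vecs q d \<subseteq> vecs q d" using padd_in[OF q x] by blast
  have "padd q x ` vecs q d = vecs q d"
    using endo_inj_surj[OF vecs_finite sub inj] .
  then show ?thesis using inj by (simp add: bij_betw_def)
qed

lemma spd_padd:
  assumes q: "q > 0" and x: "length x = d" and u: "length u = d"
  shows "spd d (padd q x u) y mod int q = (spd d x y + spd d u y) mod int q"
proof -
  have "spd d (padd q x u) y mod int q = (\<Sum>j<d. (int (padd q x u ! j) * int (y ! j)) mod int q) mod int q"
    unfolding spd_def by (simp add: mod_sum_eq)
  also have "\<dots> = (\<Sum>j<d. ((int (x ! j) + int (u ! j)) * int (y ! j)) mod int q) mod int q"
  proof -
    have h: "\<And>j. j < d \<Longrightarrow> (int (padd q x u ! j) * int (y ! j)) mod int q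
        = ((int (x ! j) + int (u ! j)) * int (y ! j)) mod int q"
      using x u by (simp add: padd_nth of_nat_mod mod_mult_left_eq)
    show ?thesis
      by (rule arg_cong[where f="\<lambda>s. s mod int q"], rule sum.cong, rule refl) (use h in blast)
  qed
  also have "\<dots> = (\<Sum>j<d. (int (x ! j) + int (u ! j)) * int (y ! j)) mod int q"
    by (simp add: mod_sum_eq)
  also have "\<dots> = (spd d x y + spd d u y) mod int q"
    unfolding spd_def by (simp add: algebra_simps sum.distrib)
  finally show ?thesis .
qed

lemma sqdist_expand:
  assumes "length x = d"
  shows "sqdist x y = nrm d x - 2 * spd d x y + nrm d y"
  unfolding sqdist_def nrm_def spd_def using assms
  by (simp add: power2_diff sum.distrib sum_subtractf sum_distrib_left mult.assoc)

lemma sqdist_bounds: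
  assumes "valid_vec R d x" "valid_vec R d y"
  shows "0 \<le> sqdist x y \<and> sqdist x y \<le> int (R^2 * d)"
proof -
  have b: "(int (x ! j) - int (y ! j))^2 \<le> int R ^ 2" if j: "j < d" for j
  proof -
    have "x ! j \<le> R" "y ! j \<le> R" using assms j nth_mem[of j x] nth_mem[of j y]
      by (auto simp: valid_vec_def)
    then have "\<bar>int (x ! j) - int (y ! j)\<bar> \<le> int R" by linarith
    then show ?thesis by (metis abs_ge_zero power2_abs power_mono)
  qed
  have ld: "length x = d" using assms(1) by (simp add: valid_vec_def)
  have "sqdist x y \<le> (\<Sum>j<d. int R ^ 2)"
    unfolding sqdist_def ld by (rule sum_mono) (use b in simp)
  moreover have "0 \<le> sqdist x y" unfolding sqdist_def by (simp add: sum_nonneg)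
  ultimately show ?thesis by (simp add: mult.commute)
qed

lemma decode_entry:
  assumes q: "q > 0" and x: "length x = d" and u: "length u = d"
  shows "(int (nat ((nrm d y - 2 * spd d (padd q x u) y) mod int q))
        + int (nat ((2 * spd d u y) mod int q)) + nrm d x) mod int q = sqdist x y mod int q"
proof -
  let ?p = "spd d (padd q x u) y" and ?a = "spd d x y" and ?b = "spd d u y"
  have dv: "int q dvd (?p - (?a + ?b))"
    using spd_padd[OF q x u, of y] by (simp add: mod_eq_dvd_iff)
  have "(int (nat ((nrm d y - 2 * ?p) mod int q)) + int (nat ((2 * ?b) mod int q)) + nrm d x) mod int q
      = ((nrm d y - 2 * ?p) mod int q + (2 * ?b) mod int q + nrm d x) mod int q"
    using q by simp
  also have "\<dots> = (nrm d y - 2 * ?p + 2 * ?b + nrm d x) mod int q"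
    by (metis mod_add_eq mod_add_left_eq)
  also have "\<dots> = sqdist x y mod int q"
  proof -
    have "int q dvd ((nrm d y - 2 * ?p + 2 * ?b + nrm d x) - sqdist x y)"
    proof -
      have eq: "(nrm d y - 2 * ?p + 2 * ?b + nrm d x) - sqdist x y = (-2) * (?p - (?a + ?b))"
        unfolding sqdist_expand[OF x, of y] by (simp add: algebra_simps)
      show ?thesis unfolding eq using dv by (rule dvd_mult)
    qed
    then show ?thesis by (simp add: mod_eq_dvd_iff)
  qed
  finally show ?thesis .
qed

lemma Dv_eq:
  assumes q: "q > 0" and qb: "q > R^2 * d" and DB: "valid_db M d R DB" and x: "valid_vec R d x"
    and u: "u \<in> vecs q d" and i: "i < length DB"
  shows "Dv q d x (ans1 q d DB (padd q x u)) (ans2 q d DB u) i = nat (sqdist x (DB ! i))"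
proof -
  have lx: "length x = d" using x by (simp add: valid_vec_def)
  have lu: "length u = d" using u by (simp add: vecs_def)
  have yv: "valid_vec R d (DB ! i)" using DB i nth_mem[OF i] by (auto simp: valid_db_def)
  have bd: "0 \<le> sqdist x (DB ! i)" "sqdist x (DB ! i) < int q"
    using sqdist_bounds[OF x yv] qb by linarith+
  show ?thesis
    unfolding Dv_def ans1_def ans2_def using i decode_entry[OF q lx lu, of "DB ! i"] bd
    by simp
qed

theorem theorem1:
  fixes M d R q :: nat
  assumes "prime q" and "q > R^2 * d" and "M \<ge> 1"
  shows "\<exists>PU PZ Q A dec. PCR2_scheme q M d R PU PZ Q A dec \<and>
           (\<forall>DB x u z. valid_db M d R DB \<longrightarrow> valid_vec R d x \<longrightarrow> u \<in> set_pmf PU \<longrightarrow>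
              z \<in> set_pmf PZ \<longrightarrow> PCR2_cost Q A DB x u z = 2 * (d + M))"
proof -
  have q: "q > 0" using assms(1) prime_gt_0_nat by blast
  define PU where "PU = pmf_of_set (vecs q d)"
  define PZ where "PZ = return_pmf ([] :: nat list)"
  define Q where "Q = (\<lambda>(n::nat) x u. if n = 1 then padd q x u else u)"
  define A where "A = (\<lambda>(n::nat) DB p (z::nat list). if n = 1 then ans1 q d DB p else ans2 q d DB p)"
  define dec where "dec = (\<lambda>x (q1::nat list) (q2::nat list) a1 a2. decf q d x a1 a2)"
  have sPU: "set_pmf PU = vecs q d"
    unfolding PU_def using vecs_finite vecs_ne[OF q] by simp
  have C1: "field_symbols q (Q n x u) \<and> field_symbols q (A n DB (Q n x u) z)"
    if "valid_db M d R DB" "valid_vec R d x" "u \<in> set_pmf PU" for DB x u z and n :: nat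
  proof -
    have lx: "length x = d" using that by (simp add: valid_vec_def)
    have uv: "u \<in> vecs q d" using that sPU by simp
    have "Q n x u \<in> vecs q d" unfolding Q_def using padd_in[OF q lx uv] uv by simp
    then have "field_symbols q (Q n x u)" by (auto simp: vecs_def field_symbols_def)
    moreover have "field_symbols q (A n DB (Q n x u) z)"
      unfolding A_def ans1_def ans2_def field_symbols_def using q
      by (auto simp: nat_less_iff)
    ultimately show ?thesis by blast
  qed
  have C2: "dec x (Q 1 x u) (Q 2 x u) (A 1 DB (Q 1 x u) z) (A 2 DB (Q 2 x u) z) = closest x DB"
    if DB: "valid_db M d R DB" and x: "valid_vec R d x" and u: "u \<in> set_pmf PU" for DB x u z
  proof -
    have uv: "u \<in> vecs q d" using u sPU by simp
    let ?a1 = "ans1 q d DB (padd q x u)" and ?a2 = "ans2 q d DB u"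
    have l1: "length ?a1 = length DB" by (simp add: ans1_def)
    have nn: "\<And>i. i < length DB \<Longrightarrow> 0 \<le> sqdist x (DB ! i)"
    proof -
      fix i assume i: "i < length DB"
      have yv: "valid_vec R d (DB ! i)" using DB i nth_mem[OF i] by (auto simp: valid_db_def)
      show "0 \<le> sqdist x (DB ! i)" using sqdist_bounds[OF x yv] by simp
    qed
    have "dec x (Q 1 x u) (Q 2 x u) (A 1 DB (Q 1 x u) z) (A 2 DB (Q 2 x u) z) = decf q d x ?a1 ?a2"
      unfolding dec_def Q_def A_def by simp
    also have "\<dots> = closest x DB"
      unfolding decf_def closest_def l1
    proof (rule arg_cong[where f = Least], rule ext)
      fix i
      show "(i < length DB \<and> (\<forall>k<length DB. Dv q d x ?a1 ?a2 i \<le> Dv q d x ?a1 ?a2 k)) =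
            (i < length DB \<and> (\<forall>k<length DB. sqdist x (DB ! i) \<le> sqdist x (DB ! k)))"
      proof -
        have "\<And>k. i < length DB \<Longrightarrow> k < length DB \<Longrightarrow>
            (Dv q d x ?a1 ?a2 i \<le> Dv q d x ?a1 ?a2 k) = (sqdist x (DB ! i) \<le> sqdist x (DB ! k))"
        proof -
          fix k assume ik: "i < length DB" "k < length DB"
          have e1: "Dv q d x ?a1 ?a2 i = nat (sqdist x (DB ! i))" using Dv_eq[OF q assms(2) DB x uv ik(1)] .
          have e2: "Dv q d x ?a1 ?a2 k = nat (sqdist x (DB ! k))" using Dv_eq[OF q assms(2) DB x uv ik(2)] .
          have "0 \<le> sqdist x (DB ! i)" "0 \<le> sqdist x (DB ! k)" using nn ik by auto
          then show "(Dv q d x ?a1 ?a2 i \<le> Dv q d x ?a1 ?a2 k) = (sqdist x (DB ! i) \<le> sqdist x (DB ! k))"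
            unfolding e1 e2 by linarith
        qed
        then show ?thesis by blast
      qed
    qed
    finally show ?thesis .
  qed
  have C3: "map_pmf (\<lambda>(u,z). (Q n x u, A n DB (Q n x u) z)) (pair_pmf PU PZ)
      = map_pmf (\<lambda>(u,z). (Q n y u, A n DB (Q n y u) z)) (pair_pmf PU PZ)"
    if x: "valid_vec R d x" and y: "valid_vec R d y" for DB n x y
  proof -
    have gen: "map_pmf (\<lambda>(u,z). (Q n v u, A n DB (Q n v u) z)) (pair_pmf PU PZ)
        = map_pmf (\<lambda>p. (p, A n DB p [])) (map_pmf (Q n v) PU)" for v
      unfolding PZ_def pair_return_pmf2 map_pmf_comp by simp
    have inv: "map_pmf (Q n v) PU = PU" if "length v = d" for v
    proof (cases "n = 1")
      case True
      have "map_pmf (padd q v) PU = PU"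
        unfolding PU_def by (rule map_pmf_of_set_bij_betw[OF padd_bij[OF q that] vecs_ne[OF q] vecs_finite])
      then show ?thesis using True by (simp add: Q_def)
    next
      case False
      then show ?thesis by (simp add: Q_def)
    qed
    have "length x = d" "length y = d" using x y by (auto simp: valid_vec_def)
    then show ?thesis unfolding gen using inv by simp
  qed
  have C4: "PCR2_cost Q A DB x u z = 2 * (d + M)"
    if DB: "valid_db M d R DB" and x: "valid_vec R d x" and u: "u \<in> set_pmf PU" for DB x u z
  proof -
    have "length x = d" "length u = d" "length DB = M"
      using x u DB sPU by (auto simp: valid_vec_def vecs_def valid_db_def)
    then show ?thesis
      unfolding PCR2_cost_def Q_def A_def ans1_def ans2_def by (simp add: padd_len)
  qed
  have P1: "\<forall>DB x u z n. valid_db M d R DB \<longrightarrow> valid_vec R d x \<longrightarrow> u \<in> set_pmf PU \<longrightarrow>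
        z \<in> set_pmf PZ \<longrightarrow> n \<in> {1,2} \<longrightarrow>
        field_symbols q (Q n x u) \<and> field_symbols q (A n DB (Q n x u) z)"
    by (intro allI impI, rule C1)
  have P2: "\<forall>DB x u z. valid_db M d R DB \<longrightarrow> valid_vec R d x \<longrightarrow> u \<in> set_pmf PU \<longrightarrow>
        z \<in> set_pmf PZ \<longrightarrow>
        dec x (Q 1 x u) (Q 2 x u) (A 1 DB (Q 1 x u) z) (A 2 DB (Q 2 x u) z) = closest x DB"
    by (intro allI impI, rule C2)
  have P3: "\<forall>DB n x x'. valid_db M d R DB \<longrightarrow> n \<in> {1,2} \<longrightarrow> valid_vec R d x \<longrightarrow> valid_vec R d x' \<longrightarrow>
        map_pmf (\<lambda>(u,z). (Q n x u, A n DB (Q n x u) z)) (pair_pmf PU PZ)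
      = map_pmf (\<lambda>(u,z). (Q n x' u, A n DB (Q n x' u) z)) (pair_pmf PU PZ)"
    by (intro allI impI, rule C3)
  have P4: "\<forall>DB x u z. valid_db M d R DB \<longrightarrow> valid_vec R d x \<longrightarrow> u \<in> set_pmf PU \<longrightarrow>
              z \<in> set_pmf PZ \<longrightarrow> PCR2_cost Q A DB x u z = 2 * (d + M)"
    by (intro allI impI, rule C4)
  have "PCR2_scheme q M d R PU PZ Q A dec"
    unfolding PCR2_scheme_def by (intro conjI P1 P2 P3)
  then show ?thesis using P4 by (intro exI conjI)
qed

end
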